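(* Consider a common-value auction for a single item among several "slow" bidders and one "fast" bidder, all risk neutral. The value of the item evolves as $v_t = e^{m_t} v_0$ for $t \ge 0$, where $v_0>0$ and $m_t \sim N(-\tfrac{\sigma^2}{2} t, \sigma^2 t)$ (a geometric Brownian motion with $\sigma>0$, so $\mathbb{E}[v_{t+\delta}\mid v_t] = v_t$ for all $t,\delta\ge 0$). The slow bidders submit sealed bids at time $0$. The fast bidder observes the slow bidders' bids and the value process, and submits its bid at time $\Delta>0$. The highest bidder wins, pays its own bid, and receives the realized value $v_\Delta$. Then in equilibrium the slow bidders bid $0$ and the fast bidder wins the item with probability $1$; indeed, any bid $b>0$ by a slow bidder yields strictly negative expected payoff.
   Context: A bidder's payoff is $v_\Delta$ minus its bid if it wins, and $0$ otherwise. *)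

theory Defs
  imports "HOL-Probability.Probability"
begin

text \<open>Slow bidders are indexed by 0..<n; a slow bid profile is a function
  bids :: nat => real (only the values below n matter).  The fast bidder's
  strategy maps the observed slow bid profile and the observed value v_Delta
  to its bid.  Convention: a tie between the fast bidder and the highest slow
  bid is resolved in favour of the fast bidder; ties among slow bidders are
  split uniformly.\<close>

definition maxbid :: "nat \<Rightarrow> (nat \<Rightarrow> real) \<Rightarrow> real" where
  "maxbid n bids = Max (bids ` {..<n})"

definition valid_bids :: "nat \<Rightarrow> (nat \<Rightarrow> real) \<Rightarrow> bool" where
  "valid_bids n bids \<longleftrightarrow> (\<forall>i<n. bids i \<ge> 0)"

definition fast_payoff :: "nat \<Rightarrow> (nat \<Rightarrow> real) \<Rightarrow> real \<Rightarrow> real \<Rightarrow> real" where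
  "fast_payoff n bids c v = (if c \<ge> maxbid n bids then v - c else 0)"

definition slow_payoff :: "nat \<Rightarrow> (nat \<Rightarrow> real) \<Rightarrow> real \<Rightarrow> real \<Rightarrow> nat \<Rightarrow> real" where
  "slow_payoff n bids c v i =
     (if c < maxbid n bids \<and> bids i = maxbid n bids
      then (v - bids i) / real (card {j. j < n \<and> bids j = maxbid n bids})
      else 0)"

definition fast_admissible :: "((nat \<Rightarrow> real) \<Rightarrow> real \<Rightarrow> real) \<Rightarrow> bool" where
  "fast_admissible s \<longleftrightarrow>
     (\<forall>bids. s bids \<in> borel_measurable borel \<and> (\<forall>v. s bids v \<ge> 0))"

definition fast_best_response :: "nat \<Rightarrow> ((nat \<Rightarrow> real) \<Rightarrow> real \<Rightarrow> real) \<Rightarrow> bool" where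
  "fast_best_response n s \<longleftrightarrow>
     (\<forall>bids v. valid_bids n bids \<longrightarrow> v > 0 \<longrightarrow>
        (\<forall>c\<ge>0. fast_payoff n bids c v \<le> fast_payoff n bids (s bids v) v))"

definition log_value_law :: "real \<Rightarrow> real \<Rightarrow> real measure" where
  "log_value_law \<sigma> \<Delta> = density lborel (normal_density (- (\<sigma>\<^sup>2 * \<Delta> / 2)) (\<sigma> * sqrt \<Delta>))"

definition exp_slow_payoff ::
  "nat \<Rightarrow> real \<Rightarrow> real \<Rightarrow> real \<Rightarrow> ((nat \<Rightarrow> real) \<Rightarrow> real \<Rightarrow> real) \<Rightarrow> (nat \<Rightarrow> real) \<Rightarrow> nat \<Rightarrow> real" where
  "exp_slow_payoff n v0 \<sigma> \<Delta> s bids i =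
     (\<integral>m. slow_payoff n bids (s bids (exp m * v0)) (exp m * v0) i \<partial>log_value_law \<sigma> \<Delta>)"

definition fast_win_prob ::
  "nat \<Rightarrow> real \<Rightarrow> real \<Rightarrow> real \<Rightarrow> ((nat \<Rightarrow> real) \<Rightarrow> real \<Rightarrow> real) \<Rightarrow> (nat \<Rightarrow> real) \<Rightarrow> real" where
  "fast_win_prob n v0 \<sigma> \<Delta> s bids =
     measure (log_value_law \<sigma> \<Delta>) {m. s bids (exp m * v0) \<ge> maxbid n bids}"

definition equilibrium ::
  "nat \<Rightarrow> real \<Rightarrow> real \<Rightarrow> real \<Rightarrow> (nat \<Rightarrow> real) \<Rightarrow> ((nat \<Rightarrow> real) \<Rightarrow> real \<Rightarrow> real) \<Rightarrow> bool" where
  "equilibrium n v0 \<sigma> \<Delta> bids s \<longleftrightarrow>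
     valid_bids n bids \<and> fast_admissible s \<and> fast_best_response n s \<and>
     (\<forall>i<n. \<forall>b\<ge>0. exp_slow_payoff n v0 \<sigma> \<Delta> s (bids(i := b)) i
                    \<le> exp_slow_payoff n v0 \<sigma> \<Delta> s bids i)"

end

theory Submission
  imports Defs
begin

lemma LV_prob: "\<sigma> > 0 \<Longrightarrow> \<Delta> > 0 \<Longrightarrow> prob_space (log_value_law \<sigma> \<Delta>)"
  unfolding log_value_law_def
  by (rule prob_space_normal_density) simp

lemma LV_sets[simp, measurable_cong]: "sets (log_value_law \<sigma> \<Delta>) = sets borel"
  unfolding log_value_law_def by simp

lemma LV_space[simp]: "space (log_value_law \<sigma> \<Delta>) = UNIV"
  unfolding log_value_law_def by simp

lemma maxbid_ge: "n \<ge> 1 \<Longrightarrow> j < n \<Longrightarrow> bids j \<le> maxbid n bids"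
  unfolding maxbid_def by (intro Max_ge) auto

lemma maxbid_in: "n \<ge> 1 \<Longrightarrow> \<exists>j<n. bids j = maxbid n bids"
proof -
  assume "n \<ge> 1"
  then have "maxbid n bids \<in> bids ` {..<n}" unfolding maxbid_def
    by (intro Max_in) (auto simp: lessThan_empty_iff)
  then show ?thesis by auto
qed

lemma maxbid_nonneg: "n \<ge> 1 \<Longrightarrow> valid_bids n bids \<Longrightarrow> 0 \<le> maxbid n bids"
  using maxbid_ge[of n 0 bids] unfolding valid_bids_def by force

lemma br_hi:
  assumes "n \<ge> 1" "fast_best_response n s" "valid_bids n bids" "v > 0" "v > maxbid n bids"
  shows "s bids v \<ge> maxbid n bids"
proof (rule ccontr)
  assume a: "\<not> ?thesis"
  have "fast_payoff n bids (maxbid n bids) v \<le> fast_payoff n bids (s bids v) v"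
    using assms maxbid_nonneg[of n bids] unfolding fast_best_response_def by blast
  then show False using a assms(5) unfolding fast_payoff_def by auto
qed

lemma br_lo:
  assumes "n \<ge> 1" "fast_best_response n s" "valid_bids n bids" "v > 0" "v < maxbid n bids"
  shows "s bids v < maxbid n bids"
proof (rule ccontr)
  assume a: "\<not> ?thesis"
  have "fast_payoff n bids 0 v \<le> fast_payoff n bids (s bids v) v"
    using assms unfolding fast_best_response_def by blast
  then show False using a assms(4,5) unfolding fast_payoff_def by auto
qed

lemma slow_nonpos:
  assumes "n \<ge> 1" "fast_best_response n s" "valid_bids n bids" "v > 0"
  shows "slow_payoff n bids (s bids v) v i \<le> 0"
proof (cases "s bids v < maxbid n bids \<and> bids i = maxbid n bids")
  case True
  then have "v \<le> maxbid n bids" using br_hi[OF assms] by force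
  then show ?thesis using True unfolding slow_payoff_def
    by (auto intro: divide_nonpos_nonneg)
qed (auto simp: slow_payoff_def)

lemma card_pos:
  assumes "i < n" "bids i = maxbid n bids"
  shows "real (card {j. j < n \<and> bids j = maxbid n bids}) \<ge> 1"
proof -
  have "i \<in> {j. j < n \<and> bids j = maxbid n bids}" using assms by auto
  then have "card {j. j < n \<and> bids j = maxbid n bids} \<noteq> 0" by (auto simp: card_eq_0_iff)
  then show ?thesis by linarith
qed

lemma exp_nonpos:
  assumes "n \<ge> 1" "fast_best_response n s" "valid_bids n bids" "v0 > 0"
  shows "exp_slow_payoff n v0 \<sigma> \<Delta> s bids i \<le> 0"
proof -
  have "\<And>m. slow_payoff n bids (s bids (exp m * v0)) (exp m * v0) i \<le> 0"
    using slow_nonpos[OF assms(1-3)] assms(4) by simp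
  then have "0 \<le> (\<integral>m. - slow_payoff n bids (s bids (exp m * v0)) (exp m * v0) i \<partial>log_value_law \<sigma> \<Delta>)"
    by (intro integral_nonneg_AE) auto
  then show ?thesis unfolding exp_slow_payoff_def by simp
qed



lemma exp_neg:
  assumes n1: "n \<ge> 1" and adm: "fast_admissible s" and br: "fast_best_response n s"
    and vb: "valid_bids n bids" and v0: "v0 > 0" and sg: "\<sigma> > 0" and dl: "\<Delta> > 0"
    and i: "i < n" and bpos: "bids i > 0" and bmax: "\<forall>j<n. bids j \<le> bids i"
  shows "exp_slow_payoff n v0 \<sigma> \<Delta> s bids i < 0"
proof -
  interpret P: prob_space "log_value_law \<sigma> \<Delta>" using LV_prob[OF sg dl] .
  define M where "M = maxbid n bids"
  have MI: "M = bids i"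
  proof -
    obtain j where "j < n" "bids j = M" using maxbid_in[OF n1] unfolding M_def by blast
    then show ?thesis using maxbid_ge[OF n1 i, of bids] bmax unfolding M_def by force
  qed
  define K where "K = real (card {j. j < n \<and> bids j = M})"
  have K1: "K \<ge> 1" unfolding K_def M_def by (rule card_pos[OF i]) (use MI M_def in simp)
  define f where "f m = slow_payoff n bids (s bids (exp m * v0)) (exp m * v0) i" for m
  have sm[measurable]: "s bids \<in> borel_measurable borel" using adm unfolding fast_admissible_def by blast
  have sm2[measurable]: "(\<lambda>m. s bids (exp m * v0)) \<in> borel_measurable borel" by measurable
  have fm: "f \<in> borel_measurable (log_value_law \<sigma> \<Delta>)"
    unfolding f_def slow_payoff_def measurable_cong_sets[OF LV_sets refl] by measurable
  have fle: "f m \<le> 0" for m unfolding f_def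
    using slow_nonpos[OF n1 br vb, of "exp m * v0"] v0 by simp
  have fbound: "norm (f m) \<le> M" for m
  proof (cases "s bids (exp m * v0) < M \<and> bids i = M")
    case True
    have "exp m * v0 \<le> M" using True br_hi[OF n1 br vb, of "exp m * v0"] v0 unfolding M_def by force
    moreover have "exp m * v0 > 0" using v0 by simp
    ultimately have a: "\<bar>exp m * v0 - M\<bar> \<le> M" by simp
    have "\<bar>(exp m * v0 - M) / K\<bar> \<le> \<bar>exp m * v0 - M\<bar>"
      using K1 by (simp add: abs_divide divide_le_eq) (smt (verit) mult_le_cancel_left1 abs_ge_zero)
    then show ?thesis using True a unfolding f_def slow_payoff_def K_def M_def by simp
  next
    case False
    then show ?thesis unfolding f_def slow_payoff_def M_def using MI bpos M_def by auto
  qed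
  have fint: "integrable (log_value_law \<sigma> \<Delta>) f"
    by (rule P.integrable_const_bound[where B=M]) (use fbound fm in auto)
  define c where "c = ln (M / v0)"
  define A where "A = {c - 1 <..< c}"
  have fneg: "f m < 0" if "m \<in> A" for m
  proof -
    have "exp m < exp c" using that unfolding A_def by simp
    also have "exp c = M / v0" unfolding c_def using MI bpos v0 by simp
    finally have lt: "exp m * v0 < M" using v0 by (simp add: less_divide_eq)
    have slt: "s bids (exp m * v0) < M" using br_lo[OF n1 br vb, of "exp m * v0"] lt v0
      unfolding M_def by simp
    have "(exp m * v0 - M) / K < 0" using lt K1 by (simp add: divide_neg_pos)
    then show ?thesis using slt MI unfolding f_def slow_payoff_def K_def M_def by simp
  qed
  have Ameas: "A \<in> sets (log_value_law \<sigma> \<Delta>)" unfolding A_def by simp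
  have Apos: "emeasure (log_value_law \<sigma> \<Delta>) A \<noteq> 0"
  proof
    assume "emeasure (log_value_law \<sigma> \<Delta>) A = 0"
    then have "(\<integral>\<^sup>+ x. ennreal (normal_density (- (\<sigma>\<^sup>2 * \<Delta> / 2)) (\<sigma> * sqrt \<Delta>) x) * indicator A x \<partial>lborel) = 0"
      unfolding log_value_law_def A_def by (subst (asm) emeasure_density) auto
    then have "AE x in lborel. ennreal (normal_density (- (\<sigma>\<^sup>2 * \<Delta> / 2)) (\<sigma> * sqrt \<Delta>) x) * indicator A x = 0"
      by (subst (asm) nn_integral_0_iff_AE) (auto simp: A_def)
    moreover have "normal_density (- (\<sigma>\<^sup>2 * \<Delta> / 2)) (\<sigma> * sqrt \<Delta>) x > 0" for x
      using sg dl by (simp add: normal_density_pos)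
    ultimately have "AE x in lborel. x \<notin> A"
    proof (elim eventually_mono)
      fix x assume pos: "\<And>x. normal_density (- (\<sigma>\<^sup>2 * \<Delta> / 2)) (\<sigma> * sqrt \<Delta>) x > 0"
        and h: "ennreal (normal_density (- (\<sigma>\<^sup>2 * \<Delta> / 2)) (\<sigma> * sqrt \<Delta>) x) * indicator A x = 0"
      show "x \<notin> A"
      proof
        assume "x \<in> A"
        then have "ennreal (normal_density (- (\<sigma>\<^sup>2 * \<Delta> / 2)) (\<sigma> * sqrt \<Delta>) x) = 0"
          using h by simp
        then show False using pos[of x] by simp
      qed
    qed
    then have "emeasure lborel A = 0"
      by (subst (asm) AE_iff_measurable[where N=A]) (auto simp: A_def)
    then show False unfolding A_def by simp
  qed
  have "integral\<^sup>L (log_value_law \<sigma> \<Delta>) f < integral\<^sup>L (log_value_law \<sigma> \<Delta>) (\<lambda>_. 0)"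
    by (rule P.integral_less_AE[OF fint _ Apos Ameas]) (use fneg fle in \<open>auto simp: less_imp_neq\<close>)
  then show ?thesis unfolding exp_slow_payoff_def f_def by simp
qed


lemma maxbid_zero: "n \<ge> 1 \<Longrightarrow> maxbid n (\<lambda>_. 0) = 0"
proof -
  assume "n \<ge> 1"
  then have "(\<lambda>_. 0::real) ` {..<n} = {0}" by (auto simp: image_def intro!: exI[of _ 0])
  then show ?thesis unfolding maxbid_def by simp
qed

theorem mainTheorem4:
  fixes n :: nat and v0 \<sigma> \<Delta> :: real
  assumes "n \<ge> 1" and "v0 > 0" and "\<sigma> > 0" and "\<Delta> > 0"
  shows "(\<exists>s. equilibrium n v0 \<sigma> \<Delta> (\<lambda>_. 0) s)
       \<and> (\<forall>bids s. equilibrium n v0 \<sigma> \<Delta> bids s \<longrightarrow>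
            (\<forall>i<n. bids i = 0) \<and> fast_win_prob n v0 \<sigma> \<Delta> s bids = 1)
       \<and> (\<forall>bids s i. fast_admissible s \<and> fast_best_response n s \<and> valid_bids n bids
            \<and> i < n \<and> bids i > 0 \<and> (\<forall>j<n. bids j \<le> bids i)
            \<longrightarrow> exp_slow_payoff n v0 \<sigma> \<Delta> s bids i < 0)"
proof (intro conjI)
  note n1 = assms(1) and v0 = assms(2) and sg = assms(3) and dl = assms(4)
  show part3: "\<forall>bids s i. fast_admissible s \<and> fast_best_response n s \<and> valid_bids n bids
            \<and> i < n \<and> bids i > 0 \<and> (\<forall>j<n. bids j \<le> bids i)
            \<longrightarrow> exp_slow_payoff n v0 \<sigma> \<Delta> s bids i < 0"
    using exp_neg[OF n1 _ _ _ v0 sg dl] by blast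
  show "\<exists>s. equilibrium n v0 \<sigma> \<Delta> (\<lambda>_. 0) s"
  proof
    define s0 where "s0 bids v = (if maxbid n bids \<le> v \<and> 0 \<le> maxbid n bids then maxbid n bids else 0)"
      for bids :: "nat \<Rightarrow> real" and v :: real
    have adm: "fast_admissible s0"
      unfolding fast_admissible_def s0_def by (auto intro!: measurable_If)
    have br: "fast_best_response n s0"
      unfolding fast_best_response_def
    proof (intro allI impI)
      fix bids v c assume vb: "valid_bids n bids" and vp: "v > (0::real)" and c: "c \<ge> (0::real)"
      have M0: "0 \<le> maxbid n bids" using maxbid_nonneg[OF n1 vb] .
      show "fast_payoff n bids c v \<le> fast_payoff n bids (s0 bids v) v"
        using M0 vp c unfolding fast_payoff_def s0_def by auto
    qed
    show "equilibrium n v0 \<sigma> \<Delta> (\<lambda>_. 0) s0"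
      unfolding equilibrium_def
    proof (intro conjI adm br allI impI)
      show "valid_bids n (\<lambda>_. 0)" unfolding valid_bids_def by simp
      fix i b assume i: "i < n" and b: "(0::real) \<le> b"
      have vb: "valid_bids n ((\<lambda>_. 0)(i := b))" using b unfolding valid_bids_def by simp
      have "exp_slow_payoff n v0 \<sigma> \<Delta> s0 ((\<lambda>_. 0)(i := b)) i \<le> 0"
        by (rule exp_nonpos[OF n1 br vb v0])
      moreover have "exp_slow_payoff n v0 \<sigma> \<Delta> s0 (\<lambda>_. 0) i = 0"
      proof -
        have "\<And>m. slow_payoff n (\<lambda>_. 0) (s0 (\<lambda>_. 0) (exp m * v0)) (exp m * v0) i = 0"
        proof -
          fix m
          have nn: "\<And>v. 0 \<le> s0 (\<lambda>_. 0) v" using adm unfolding fast_admissible_def by blast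
          show "slow_payoff n (\<lambda>_. 0) (s0 (\<lambda>_. 0) (exp m * v0)) (exp m * v0) i = 0"
            using nn[of "exp m * v0"] unfolding slow_payoff_def maxbid_zero[OF n1] by simp
        qed
        then show ?thesis unfolding exp_slow_payoff_def by simp
      qed
      ultimately show "exp_slow_payoff n v0 \<sigma> \<Delta> s0 ((\<lambda>_. 0)(i := b)) i
                    \<le> exp_slow_payoff n v0 \<sigma> \<Delta> s0 (\<lambda>_. 0) i" by simp
    qed
  qed
  show "\<forall>bids s. equilibrium n v0 \<sigma> \<Delta> bids s \<longrightarrow>
            (\<forall>i<n. bids i = 0) \<and> fast_win_prob n v0 \<sigma> \<Delta> s bids = 1"
  proof (intro allI impI)
    fix bids s assume eq: "equilibrium n v0 \<sigma> \<Delta> bids s"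
    then have vb: "valid_bids n bids" and adm: "fast_admissible s" and br: "fast_best_response n s"
      and dev: "\<forall>i<n. \<forall>b\<ge>0. exp_slow_payoff n v0 \<sigma> \<Delta> s (bids(i := b)) i
                    \<le> exp_slow_payoff n v0 \<sigma> \<Delta> s bids i"
      unfolding equilibrium_def by auto
    have M0: "maxbid n bids = 0"
    proof (rule ccontr)
      assume "maxbid n bids \<noteq> 0"
      then have Mp: "maxbid n bids > 0" using maxbid_nonneg[OF n1 vb] by simp
      obtain i where i: "i < n" "bids i = maxbid n bids" using maxbid_in[OF n1] by blast
      have neg: "exp_slow_payoff n v0 \<sigma> \<Delta> s bids i < 0"
        using exp_neg[OF n1 adm br vb v0 sg dl i(1)] i Mp maxbid_ge[OF n1, of _ bids] by auto
      have "\<And>m. slow_payoff n (bids(i := 0)) (s (bids(i := 0)) (exp m * v0)) (exp m * v0) i = 0"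
      proof -
        fix m
        have nn: "0 \<le> s (bids(i := 0)) (exp m * v0)" using adm unfolding fast_admissible_def by blast
        show "slow_payoff n (bids(i := 0)) (s (bids(i := 0)) (exp m * v0)) (exp m * v0) i = 0"
          using nn unfolding slow_payoff_def by auto
      qed
      then have "exp_slow_payoff n v0 \<sigma> \<Delta> s (bids(i := 0)) i = 0"
        unfolding exp_slow_payoff_def by simp
      then show False using dev i(1) neg by force
    qed
    show "(\<forall>i<n. bids i = 0) \<and> fast_win_prob n v0 \<sigma> \<Delta> s bids = 1"
    proof
      show "\<forall>i<n. bids i = 0"
        using M0 maxbid_ge[OF n1, of _ bids] vb unfolding valid_bids_def by force
      interpret P: prob_space "log_value_law \<sigma> \<Delta>" using LV_prob[OF sg dl] .
      have "{m. s bids (exp m * v0) \<ge> maxbid n bids} = space (log_value_law \<sigma> \<Delta>)"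
        using adm M0 unfolding fast_admissible_def by auto
      then show "fast_win_prob n v0 \<sigma> \<Delta> s bids = 1"
        unfolding fast_win_prob_def using P.prob_space by simp
    qed
  qed
qed

end
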